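(* Let $d\ge2$, $(S,\mathfrak n,\mathbf k)$ a complete regular local ring with $\mathbf k$ algebraically closed of characteristic not dividing $d$, $0\ne f\in\mathfrak n^2$, and $R^\sharp=S[[z]]/(f+z^d)$. Let $N$ be a maximal Cohen-Macaulay $R^\sharp$-module and $X\in\mathrm{MF}_S^d(f)$. Then $X^{\sharp\flat}\cong\bigoplus_{k\in\mathbb Z_d}T^k(X)$ in $\mathrm{MF}_S^d(f)$ and $N^{\flat\sharp}\cong\bigoplus_{k\in\mathbb Z_d}(\sigma^k)^*N$ as $R^\sharp$-modules.
   Context: $\mathrm{MF}_S^d(f)$ is the category of matrix factorizations of $f$ with $d$ factors: objects are $X=(\phi_1:F_2\to F_1,\dots,\phi_d:F_1\to F_d)$, $F_i$ finitely generated free $S$-modules of equal rank, with $\phi_1\cdots\phi_d=f\cdot1_{F_1}$; morphisms $(\alpha_1,\dots,\alpha_d)$, $\alpha_i:F_i\to F_i'$, with $\alpha_i\phi_i=\phi_i'\alpha_{i+1}$ (indices mod $d$). The shift functor is $T(\phi_1,\dots,\phi_d)=(\phi_2,\dots,\phi_d,\phi_1)$. A maximal Cohen-Macaulay (MCM) $R^\sharp$-module is the same as a finitely generated $R^\sharp$-module that is free over $S$. Fix $\mu\in S$ with $\mu^d=-1$ and a primitive $d$th root of unity $\omega\in S$ (these exist). For an MCM $R^\sharp$-module $N$ with $\phi:N\to N$ the $S$-linear map given by multiplication by $z$, set $N^\flat=(\mu\phi,\mu\phi,\dots,\mu\phi)\in\mathrm{MF}_S^d(f)$. For $X=(\phi_1,\dots,\phi_d)$,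 $X^\sharp$ is the $S$-module $F_d\oplus F_{d-1}\oplus\cdots\oplus F_1$ with $z\cdot(x_d,x_{d-1},\dots,x_1)=(\mu^{-1}\phi_d(x_1),\mu^{-1}\phi_{d-1}(x_d),\dots,\mu^{-1}\phi_1(x_2))$, an MCM $R^\sharp$-module. $\sigma:R^\sharp\to R^\sharp$ is the automorphism fixing $S$ with $\sigma(z)=\omega z$, and $(\sigma^k)^*N$ denotes $N$ with scalars restricted along $\sigma^k$. *)

theory Defs
  imports "Jordan_Normal_Form.Matrix" "HOL-Computational_Algebra.Polynomial"
begin

definition is_ideal :: "'a::comm_ring_1 set \<Rightarrow> bool" where
  "is_ideal I \<longleftrightarrow> 0 \<in> I \<and> (\<forall>x\<in>I. \<forall>y\<in>I. x + y \<in> I) \<and> (\<forall>r. \<forall>x\<in>I. r * x \<in> I)"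

definition is_prime_ideal :: "'a::comm_ring_1 set \<Rightarrow> bool" where
  "is_prime_ideal P \<longleftrightarrow> is_ideal P \<and> P \<noteq> UNIV \<and> (\<forall>a b. a * b \<in> P \<longrightarrow> a \<in> P \<or> b \<in> P)"

definition gen_ideal :: "'a::comm_ring_1 set \<Rightarrow> 'a set" where
  "gen_ideal G = \<Inter>{J. is_ideal J \<and> G \<subseteq> J}"

definition noetherian_ring :: "'a::comm_ring_1 itself \<Rightarrow> bool" where
  "noetherian_ring _ \<longleftrightarrow> (\<forall>I::'a set. is_ideal I \<longrightarrow> (\<exists>G. finite G \<and> gen_ideal G = I))"

text \<open>The set of non-units; S is local iff this is an ideal (then it is the unique maximal ideal).\<close>
definition max_ideal :: "'a::comm_ring_1 set" where
  "max_ideal = {x. \<not> x dvd 1}"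

definition local_ring :: "'a::comm_ring_1 itself \<Rightarrow> bool" where
  "local_ring _ \<longleftrightarrow> is_ideal (max_ideal :: 'a set)"

definition prime_chain :: "'a::comm_ring_1 itself \<Rightarrow> nat \<Rightarrow> bool" where
  "prime_chain _ k \<longleftrightarrow> (\<exists>P :: nat \<Rightarrow> 'a set. (\<forall>i\<le>k. is_prime_ideal (P i)) \<and> (\<forall>i<k. P i \<subset> P (Suc i)))"

definition embedding_dim :: "'a::comm_ring_1 itself \<Rightarrow> nat" where
  "embedding_dim _ = (LEAST k. \<exists>G::'a set. finite G \<and> card G = k \<and> gen_ideal G = max_ideal)"

definition regular_local_ring :: "'a::comm_ring_1 itself \<Rightarrow> bool" where
  "regular_local_ring T \<longleftrightarrow> noetherian_ring T \<and> local_ring T \<and>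
     (\<exists>e. prime_chain T e \<and> (\<forall>k. prime_chain T k \<longrightarrow> k \<le> e) \<and> embedding_dim T = e)"

definition ideal_pow :: "'a::comm_ring_1 set \<Rightarrow> nat \<Rightarrow> 'a set" where
  "ideal_pow I k = gen_ideal {prod_list xs | xs. length xs = k \<and> set xs \<subseteq> I}"

definition complete_local_ring :: "'a::comm_ring_1 itself \<Rightarrow> bool" where
  "complete_local_ring _ \<longleftrightarrow>
     (\<Inter>k. ideal_pow (max_ideal::'a set) k) = {0} \<and>
     (\<forall>s::nat \<Rightarrow> 'a. (\<forall>k. \<exists>N. \<forall>i\<ge>N. \<forall>j\<ge>N. s i - s j \<in> ideal_pow max_ideal k) \<longrightarrow>
        (\<exists>L. \<forall>k. \<exists>N. \<forall>i\<ge>N. s i - L \<in> ideal_pow max_ideal k))"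

text \<open>Residue field S/n is algebraically closed: every monic nonconstant polynomial has a root mod n.\<close>
definition residue_field_alg_closed :: "'a::comm_ring_1 itself \<Rightarrow> bool" where
  "residue_field_alg_closed _ \<longleftrightarrow>
     (\<forall>p::'a poly. lead_coeff p = 1 \<and> degree p \<ge> 1 \<longrightarrow> (\<exists>a. poly p a \<in> max_ideal))"

definition primitive_root :: "nat \<Rightarrow> 'a::comm_ring_1 \<Rightarrow> bool" where
  "primitive_root d w \<longleftrightarrow> w ^ d = 1 \<and> (\<forall>j. 0 < j \<and> j < d \<longrightarrow> w ^ j \<noteq> 1)"

definition unit_inv :: "'a::comm_ring_1 \<Rightarrow> 'a" where
  "unit_inv u = (THE v. u * v = 1)"

text \<open>X = [phi_1, ..., phi_d] (0-indexed list), all n x n, phi_1 * ... * phi_d = f * 1.\<close>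
definition is_MF :: "nat \<Rightarrow> 'a::comm_ring_1 \<Rightarrow> nat \<Rightarrow> 'a mat list \<Rightarrow> bool" where
  "is_MF d f n X \<longleftrightarrow> length X = d \<and> (\<forall>i<d. X ! i \<in> carrier_mat n n) \<and>
     foldr (*) X (1\<^sub>m n) = f \<cdot>\<^sub>m 1\<^sub>m n"

definition is_MF_hom :: "nat \<Rightarrow> nat \<Rightarrow> nat \<Rightarrow> 'a::comm_ring_1 mat list \<Rightarrow> 'a mat list \<Rightarrow> 'a mat list \<Rightarrow> bool" where
  "is_MF_hom d n n' X X' A \<longleftrightarrow> length A = d \<and> (\<forall>i<d. A ! i \<in> carrier_mat n' n) \<and>
     (\<forall>i<d. A ! i * X ! i = X' ! i * A ! ((i + 1) mod d))"

definition MF_iso :: "nat \<Rightarrow> 'a::comm_ring_1 mat list \<Rightarrow> 'a mat list \<Rightarrow> bool" where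
  "MF_iso d X X' \<longleftrightarrow> (\<exists>A B. is_MF_hom d (dim_row (X ! 0)) (dim_row (X' ! 0)) X X' A \<and>
      is_MF_hom d (dim_row (X' ! 0)) (dim_row (X ! 0)) X' X B \<and>
      (\<forall>i<d. B ! i * A ! i = 1\<^sub>m (dim_row (X ! 0)) \<and> A ! i * B ! i = 1\<^sub>m (dim_row (X' ! 0))))"

definition MF_shift :: "nat \<Rightarrow> 'a mat list \<Rightarrow> 'a mat list" where
  "MF_shift k X = rotate k X"

definition MF_sum :: "nat \<Rightarrow> 'a::zero mat list list \<Rightarrow> 'a mat list" where
  "MF_sum d Xs = map (\<lambda>i. diag_block_mat (map (\<lambda>X. X ! i) Xs)) [0..<d]"

text \<open>An MCM R#-module (R# = S[[z]]/(f+z^d)) is represented by (a basis of) its underlying free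
  S-module S^m together with the matrix Z of multiplication by z.\<close>
definition is_MCM :: "nat \<Rightarrow> 'a::comm_ring_1 \<Rightarrow> 'a mat \<Rightarrow> bool" where
  "is_MCM d f Z \<longleftrightarrow> Z \<in> carrier_mat (dim_row Z) (dim_row Z) \<and>
     Z ^\<^sub>m d = - (f \<cdot>\<^sub>m 1\<^sub>m (dim_row Z))"

definition MCM_iso :: "'a::comm_ring_1 mat \<Rightarrow> 'a mat \<Rightarrow> bool" where
  "MCM_iso Z Z' \<longleftrightarrow> (\<exists>P Q. P \<in> carrier_mat (dim_row Z') (dim_row Z) \<and>
      Q \<in> carrier_mat (dim_row Z) (dim_row Z') \<and>
      Q * P = 1\<^sub>m (dim_row Z) \<and> P * Q = 1\<^sub>m (dim_row Z') \<and> P * Z = Z' * P)"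

definition MCM_sum :: "'a::zero mat list \<Rightarrow> 'a mat" where
  "MCM_sum Zs = diag_block_mat Zs"

text \<open>Restriction of scalars along sigma^k (sigma(z) = omega z): z now acts by omega^k Z.\<close>
definition restrict_sigma :: "'a::comm_ring_1 \<Rightarrow> nat \<Rightarrow> 'a mat \<Rightarrow> 'a mat" where
  "restrict_sigma \<omega> k Z = (\<omega> ^ k) \<cdot>\<^sub>m Z"

definition flat :: "nat \<Rightarrow> 'a::comm_ring_1 \<Rightarrow> 'a mat \<Rightarrow> 'a mat list" where
  "flat d \<mu> Z = replicate d (\<mu> \<cdot>\<^sub>m Z)"

text \<open>X-sharp on F_d + F_(d-1) + ... + F_1: block number j (0-based) is F_(d-j);
  z(x_d,...,x_1) = (mu^-1 phi_d x_1, mu^-1 phi_(d-1) x_d, ..., mu^-1 phi_1 x_2).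
  So block (j, (j-1) mod d) is mu^-1 phi_(d-j) (phi_d for j = 0), i.e. list index (2d-j-1) mod d.\<close>
definition sharp :: "nat \<Rightarrow> 'a::comm_ring_1 \<Rightarrow> 'a mat list \<Rightarrow> 'a mat" where
  "sharp d \<mu> X = (let n = dim_row (X ! 0) in
     mat (d * n) (d * n) (\<lambda>(r, c).
       if c div n = (r div n + d - 1) mod d
       then unit_inv \<mu> * (X ! ((2 * d - r div n - 1) mod d)) $$ (r mod n, c mod n)
       else 0))"

end

theory Submission
  imports Defs
begin

lemma diag_block_mat_eq:
  assumes "\<forall>M\<in>set Ms. M \<in> carrier_mat n n"
  shows "diag_block_mat Ms = mat (length Ms * n) (length Ms * n)
     (\<lambda>(r,c). if r div n = c div n then Ms!(r div n) $$ (r mod n, c mod n) else 0)"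
  using assms
proof (induction Ms)
  case Nil
  then show ?case by (auto intro!: eq_matI)
next
  case (Cons A Ms)
  then have IH: "diag_block_mat Ms = mat (length Ms * n) (length Ms * n)
     (\<lambda>(r,c). if r div n = c div n then Ms!(r div n) $$ (r mod n, c mod n) else 0)"
    and A: "A \<in> carrier_mat n n" by auto
  show ?case
  proof (rule eq_matI)
    fix i j assume i: "i < dim_row (mat (length (A # Ms) * n) (length (A # Ms) * n)
     (\<lambda>(r,c). if r div n = c div n then (A#Ms)!(r div n) $$ (r mod n, c mod n) else 0))"
      and j: "j < dim_col (mat (length (A # Ms) * n) (length (A # Ms) * n)
     (\<lambda>(r,c). if r div n = c div n then (A#Ms)!(r div n) $$ (r mod n, c mod n) else 0))"
    have i': "i < n + length Ms * n" and j': "j < n + length Ms * n" using i j by auto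
    then have np: "n > 0" by (cases n) auto
    show "diag_block_mat (A # Ms) $$ (i, j) = mat (length (A # Ms) * n) (length (A # Ms) * n)
     (\<lambda>(r,c). if r div n = c div n then (A#Ms)!(r div n) $$ (r mod n, c mod n) else 0) $$ (i, j)"
      using A i' j' np
      by (auto simp: IH Let_def le_div_geq le_mod_geq)
  qed (use Cons in \<open>auto simp: dim_diag_block_mat\<close>)
qed

lemma sum_split_blocks:
  fixes d m :: nat shows "(\<Sum>t\<in>{0..<d*m}. g t) = (\<Sum>j<d. \<Sum>b<m. g (j*m+b))"
proof (induction d)
  case 0 then show ?case by simp
next
  case (Suc d)
  have "(\<Sum>t\<in>{0..<Suc d*m}. g t) = (\<Sum>t\<in>{0..<d*m}. g t) + (\<Sum>t\<in>{d*m..<d*m+m}. g t)"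
    using sum.atLeastLessThan_concat[of 0 "d*m" "d*m+m" g] by (simp add: add.commute)
  also have "(\<Sum>t\<in>{d*m..<d*m+m}. g t) = (\<Sum>b<m. g (d*m+b))"
    using sum.shift_bounds_nat_ivl[of g 0 "d*m" m]
    by (simp add: atLeast0LessThan add.commute)
  finally show ?case using Suc by simp
qed

lemma blk_lt: "j < d \<Longrightarrow> b < m \<Longrightarrow> j*m+b < d*(m::nat)"
proof -
  assume "j < d" "b < m"
  then have "j*m + b < j*m + m" by simp
  also have "\<dots> = Suc j * m" by simp
  also have "\<dots> \<le> d*m" using \<open>j<d\<close> by (intro mult_le_mono1) simp
  finally show ?thesis .
qed

lemma blk_div[simp]: "b < m \<Longrightarrow> (j*m+b) div m = (j::nat)"
  by simp
lemma blk_mod[simp]: "b < m \<Longrightarrow> (j*m+b) mod m = (b::nat)"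
  by simp

lemma mult_entry_blocks:
  assumes "A \<in> carrier_mat N (d*m)" "B \<in> carrier_mat (d*m) K" "r < N" "c < K"
  shows "(A*B) $$ (r,c) = (\<Sum>j<d. \<Sum>b<m. A$$(r,j*m+b) * B$$(j*m+b,c))"
proof -
  have "(A*B) $$ (r,c) = (\<Sum>t\<in>{0..<d*m}. A$$(r,t) * B$$(t,c))"
    using assms by (auto simp: scalar_prod_def intro!: sum.cong)
  also have "\<dots> = (\<Sum>j<d. \<Sum>b<m. A$$(r,j*m+b) * B$$(j*m+b,c))"
    by (rule sum_split_blocks)
  finally show ?thesis .
qed

lemma if0_mult: "(if P then x else 0) * y = (if P then x * y else (0::'a::semiring_0))" by simp
lemma mult_if0: "y * (if P then x else 0) = (if P then y * x else (0::'a::semiring_0))" by simp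

lemma unit_inv_eq: "(x::'a::comm_ring_1) * y = 1 \<Longrightarrow> unit_inv x = y"
  unfolding unit_inv_def
proof (rule the_equality)
  fix v assume "x * y = 1" "x * v = 1"
  then show "v = y" by (metis mult.commute mult.left_neutral mult.assoc)
qed

lemma mu_inv: assumes "(x::'a::comm_ring_1) ^ d = -1" "d \<ge> 1"
  shows "unit_inv x * x = 1"
proof -
  have e: "x * x ^ (d - 1) = -1" using assms by (cases d) auto
  have "x * (- (x ^ (d - 1))) = 1" using e by simp
  then show ?thesis using unit_inv_eq by (metis mult.commute)
qed

lemma ideal_sum: assumes "is_ideal I" "finite A" "\<forall>j\<in>A. g j \<in> I" shows "sum g A \<in> I"
  using assms(2,3) by (induction A rule: finite_induct) (use assms(1) in \<open>auto simp: is_ideal_def\<close>)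

lemma unit_plus_nonunit:
  assumes loc: "local_ring TYPE('a::comm_ring_1)" and x: "(x::'a) dvd 1" and y: "y \<in> max_ideal"
  shows "(x + y) dvd 1"
proof (rule ccontr)
  assume "\<not> (x + y) dvd 1"
  then have "x + y \<in> max_ideal" by (simp add: max_ideal_def)
  moreover have "(-1) * y \<in> max_ideal" using loc y unfolding local_ring_def is_ideal_def by blast
  ultimately have "(x + y) + (-1) * y \<in> max_ideal" using loc unfolding local_ring_def is_ideal_def by blast
  then have "x \<in> max_ideal" by simp
  then show False using x by (simp add: max_ideal_def)
qed

lemma geom_zero:
  fixes u :: "'a::comm_ring_1"
  assumes loc: "local_ring TYPE('a)" and dunit: "of_nat d \<notin> (max_ideal :: 'a set)"
    and ud: "u ^ d = 1" and u1: "u \<noteq> 1"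
  shows "(\<Sum>j<d. u^j) = 0"
proof -
  define G where "G = (\<Sum>j<d. u^j)"
  have I: "is_ideal (max_ideal :: 'a set)" using loc by (simp add: local_ring_def)
  have zero: "(u - 1) * G = 0" using power_diff_1_eq[of u d] ud by (simp add: G_def)
  have "(u - 1) dvd 1"
  proof (rule ccontr)
    assume "\<not> (u - 1) dvd 1"
    then have um: "u - 1 \<in> max_ideal" by (simp add: max_ideal_def)
    have "\<forall>j\<in>{..<d}. u^j - 1 \<in> max_ideal"
    proof
      fix j assume "j \<in> {..<d}"
      have "u^j - 1 = (\<Sum>i<j. u^i) * (u - 1)" using power_diff_1_eq[of u j] by (simp add: mult.commute)
      then show "u^j - 1 \<in> max_ideal" using I um by (simp add: is_ideal_def)
    qed
    then have "(\<Sum>j<d. u^j - 1) \<in> max_ideal" using ideal_sum[OF I, of "{..<d}" "\<lambda>j. u^j - 1"] by simp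
    moreover have "(\<Sum>j<d. u^j - 1) = G - of_nat d" by (simp add: G_def sum_subtractf)
    ultimately have "G - of_nat d \<in> max_ideal" by simp
    moreover have "(of_nat d :: 'a) dvd 1" using dunit by (simp add: max_ideal_def)
    ultimately have "(of_nat d + (G - of_nat d)) dvd 1" using unit_plus_nonunit[OF loc] by blast
    then have Gu: "G dvd 1" by simp
    from Gu obtain h where "1 = G * h" by (rule dvdE)
    then have hG: "G * h = 1" by simp
    have "u - 1 = (u - 1) * (G * h)" using hG by simp
    also have "\<dots> = ((u - 1) * G) * h" by (simp only: mult.assoc)
    also have "\<dots> = 0" using zero by simp
    finally have "u - 1 = 0" .
    then show False using u1 by simp
  qed
  then obtain h where "1 = (u - 1) * h" by (rule dvdE)
  then have hu: "(u - 1) * h = 1" by simp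
  have "G = ((u - 1) * h) * G" using hu by simp
  also have "\<dots> = h * ((u - 1) * G)" by (simp only: mult.assoc mult.commute[of h] mult.left_commute[of h])
  also have "\<dots> = 0" using zero by simp
  finally show ?thesis by (simp add: G_def)
qed

lemma pow_mod: "(w::'a::comm_ring_1) ^ d = 1 \<Longrightarrow> w ^ x = w ^ (x mod d)"
proof -
  assume w: "w ^ d = 1"
  have "w ^ x = w ^ (d * (x div d) + x mod d)" by simp
  also have "\<dots> = (w ^ d) ^ (x div d) * w ^ (x mod d)" by (simp only: power_add power_mult)
  also have "\<dots> = w ^ (x mod d)" by (simp add: w)
  finally show ?thesis .
qed

lemma orth:
  fixes \<omega> :: "'a::comm_ring_1"
  assumes loc: "local_ring TYPE('a)" and dunit: "of_nat d \<notin> (max_ideal :: 'a set)"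
    and prim: "primitive_root d \<omega>" and k: "k < d" and l: "l < d"
  shows "(\<Sum>j<d. \<omega>^(j*((d-1)*k+l))) = (if k = l then of_nat d else 0)"
proof -
  have wd: "\<omega>^d = 1" using prim by (simp add: primitive_root_def)
  show ?thesis
  proof (cases "k = l")
    case True
    have "(d-1)*k+l = d*k" using True k by (cases d) auto
    then have "\<And>j. \<omega>^(j*((d-1)*k+l)) = 1"
      by (simp add: power_mult wd mult.left_commute[of _ d])
    then show ?thesis using True by simp
  next
    case False
    define s where "s = (d-1)*k+l"
    define u where "u = \<omega>^s"
    have ud: "u^d = 1" unfolding u_def by (simp add: wd flip: power_mult) (simp add: mult.commute power_mult wd)
    have "s mod d \<noteq> 0"
    proof
      assume s0: "s mod d = 0"
      have "(s + k) mod d = k" using s0 k by (simp add: mod_add_left_eq[symmetric])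
      moreover have "s + k = d*k + l" using k by (cases d) (auto simp: s_def)
      then have "(s + k) mod d = l" using l by simp
      ultimately show False using False by simp
    qed
    moreover have "s mod d < d" using k by simp
    ultimately have "\<omega>^(s mod d) \<noteq> 1" using prim by (simp add: primitive_root_def)
    then have u1: "u \<noteq> 1" using pow_mod[OF wd, of s] by (simp add: u_def)
    have "(\<Sum>j<d. \<omega>^(j*((d-1)*k+l))) = (\<Sum>j<d. u^j)"
      unfolding u_def s_def by (intro sum.cong refl) (simp only: mult.commute[of _ "(d-1)*k+l"] power_mult)
    also have "\<dots> = 0" using geom_zero[OF loc dunit ud u1] .
    finally show ?thesis using False by simp
  qed
qed

lemma collapse_l: "(a::nat) < m \<Longrightarrow> (\<Sum>e<m. (if a = e then X e else 0) * Y e) = X a * (Y a :: 'a::semiring_0)"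
  by (simp add: if0_mult)
lemma collapse_r: "(b::nat) < m \<Longrightarrow> (\<Sum>e<m. Y e * (if e = b then X e else 0)) = Y b * (X b :: 'a::semiring_0)"
  by (simp add: mult_if0)

lemma collapse2: "(a::nat) < m \<Longrightarrow> (\<Sum>e<m. (if a = e then A else 0) * (if e = b then B else 0)) = (if a = b then A * B else (0::'a::semiring_0))"
proof -
  assume a: "a < m"
  have "\<And>e. (if a = e then A else 0) * (if e = b then B else 0) = (if a = e then (if a = b then A * B else 0) else 0)"
    by auto
  then have "(\<Sum>e<m. (if a = e then A else 0) * (if e = b then B else 0)) = (\<Sum>e<m. (if a = e then (if a = b then A * B else 0) else 0))"
    by (simp only:)
  also have "\<dots> = (if a = b then A * B else 0)" using a by simp
  finally show ?thesis .
qed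

lemma mod2: "(x::nat) < 2*d \<Longrightarrow> x mod d = (if x < d then x else x - d)"
proof (cases "x < d")
  case False
  assume "x < 2*d"
  then have "x - d < d" using False by simp
  then show ?thesis using False by (simp add: le_mod_geq)
qed simp

lemma idx_shift: "(j::nat) < d \<Longrightarrow> l < d \<Longrightarrow> (l = (j+d-1) mod d) = (j = (l+1) mod d)"
  by (simp add: mod2) arith

lemma flat_nth: "i < d \<Longrightarrow> flat d \<mu> Z ! i = \<mu> \<cdot>\<^sub>m Z"
  by (simp add: flat_def)

lemma part2:
  fixes f \<mu> \<omega> :: "'a::comm_ring_1" and d :: nat and Z :: "'a mat"
  assumes d2: "d \<ge> 2" and mu: "\<mu>^d = -1" and loc: "local_ring TYPE('a)"
    and dunit: "of_nat d \<notin> (max_ideal :: 'a set)" and prim: "primitive_root d \<omega>"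
    and Z: "is_MCM d f Z"
  shows "MCM_iso (sharp d \<mu> (flat d \<mu> Z)) (MCM_sum (map (\<lambda>k. restrict_sigma \<omega> k Z) [0..<d]))"
proof -
  define m where "m = dim_row Z"
  have Zc: "Z \<in> carrier_mat m m" using Z by (simp add: is_MCM_def m_def)
  have wd: "\<omega>^d = 1" using prim by (simp add: primitive_root_def)
  have mi: "unit_inv \<mu> * \<mu> = 1" using mu_inv[OF mu] d2 by simp
  have "(of_nat d :: 'a) dvd 1" using dunit by (simp add: max_ideal_def)
  then obtain dinv where dinv: "of_nat d * dinv = (1::'a)" by (metis dvdE)
  define N where "N = d*m"
  define S where "S = sharp d \<mu> (flat d \<mu> Z)"
  define D where "D = MCM_sum (map (\<lambda>k. restrict_sigma \<omega> k Z) [0..<d])"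
  have S_eq: "S = mat N N (\<lambda>(r,c). if c div m = (r div m + d - 1) mod d then Z $$ (r mod m, c mod m) else 0)"
  proof (rule eq_matI)
    have f0: "dim_row (flat d \<mu> Z ! 0) = m" using d2 by (simp add: flat_def m_def)
    show dS: "dim_row S = dim_row (mat N N (\<lambda>(r,c). if c div m = (r div m + d - 1) mod d then Z $$ (r mod m, c mod m) else 0))"
      "dim_col S = dim_col (mat N N (\<lambda>(r,c). if c div m = (r div m + d - 1) mod d then Z $$ (r mod m, c mod m) else 0))"
      unfolding S_def sharp_def Let_def f0 N_def by simp_all
    fix r c assume "r < dim_row (mat N N (\<lambda>(r,c). if c div m = (r div m + d - 1) mod d then Z $$ (r mod m, c mod m) else 0))"
        "c < dim_col (mat N N (\<lambda>(r,c). if c div m = (r div m + d - 1) mod d then Z $$ (r mod m, c mod m) else 0))"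
    then have r': "r < d*m" and c': "c < d*m" by (simp_all add: N_def)
    then have mp: "m > 0" by (cases m) auto
    have dp: "d > 0" using d2 by simp
    define ix where "ix = (2 * d - r div m - 1) mod d"
    have ix: "ix < d" using dp by (simp add: ix_def)
    have "S $$ (r,c) = (if c div m = (r div m + d - 1) mod d
              then unit_inv \<mu> * (flat d \<mu> Z ! ix) $$ (r mod m, c mod m) else 0)"
      unfolding S_def sharp_def Let_def f0 ix_def by (simp only: index_mat(1) r' c' prod.case)
    also have "\<dots> = (if c div m = (r div m + d - 1) mod d then Z $$ (r mod m, c mod m) else 0)"
    proof -
      have a: "r mod m < dim_row Z" "c mod m < dim_col Z" using mp Zc by auto
      have "unit_inv \<mu> * (\<mu> \<cdot>\<^sub>m Z) $$ (r mod m, c mod m) = (unit_inv \<mu> * \<mu>) * Z $$ (r mod m, c mod m)"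
        using a by (simp only: index_smult_mat(1) mult.assoc)
      then have "unit_inv \<mu> * (\<mu> \<cdot>\<^sub>m Z) $$ (r mod m, c mod m) = Z $$ (r mod m, c mod m)"
        using mi by simp
      then show ?thesis unfolding flat_nth[OF ix] by (simp only:)
    qed
    also have "\<dots> = mat N N (\<lambda>(r,c). if c div m = (r div m + d - 1) mod d then Z $$ (r mod m, c mod m) else 0) $$ (r,c)"
      by (simp only: N_def index_mat(1) r' c' prod.case)
    finally show "S $$ (r,c) = mat N N (\<lambda>(r,c). if c div m = (r div m + d - 1) mod d then Z $$ (r mod m, c mod m) else 0) $$ (r,c)" .
  qed
  have D_eq: "D = mat N N (\<lambda>(r,c). if r div m = c div m then \<omega>^(r div m) * Z$$(r mod m, c mod m) else 0)"
  proof -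
    have "D = mat (length (map (\<lambda>k. restrict_sigma \<omega> k Z) [0..<d]) * m) (length (map (\<lambda>k. restrict_sigma \<omega> k Z) [0..<d]) * m)
     (\<lambda>(r,c). if r div m = c div m then (map (\<lambda>k. restrict_sigma \<omega> k Z) [0..<d])!(r div m) $$ (r mod m, c mod m) else 0)"
      unfolding D_def MCM_sum_def
      by (rule diag_block_mat_eq) (use Zc in \<open>auto simp: restrict_sigma_def\<close>)
    also have "\<dots> = mat N N (\<lambda>(r,c). if r div m = c div m then \<omega>^(r div m) * Z$$(r mod m, c mod m) else 0)"
    proof (rule eq_matI)
      fix r c assume "r < dim_row (mat N N (\<lambda>(r,c). if r div m = c div m then \<omega>^(r div m) * Z$$(r mod m, c mod m) else 0))"
        "c < dim_col (mat N N (\<lambda>(r,c). if r div m = c div m then \<omega>^(r div m) * Z$$(r mod m, c mod m) else 0))"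
      then have r': "r < d*m" and c': "c < d*m" by (auto simp: N_def)
      then have mp: "m > 0" by (cases m) auto
      have "r div m < d" using r' by (simp add: less_mult_imp_div_less)
      then show "mat (length (map (\<lambda>k. restrict_sigma \<omega> k Z) [0..<d]) * m) (length (map (\<lambda>k. restrict_sigma \<omega> k Z) [0..<d]) * m)
     (\<lambda>(r,c). if r div m = c div m then (map (\<lambda>k. restrict_sigma \<omega> k Z) [0..<d])!(r div m) $$ (r mod m, c mod m) else 0) $$ (r,c) =
         mat N N (\<lambda>(r,c). if r div m = c div m then \<omega>^(r div m) * Z$$(r mod m, c mod m) else 0) $$ (r,c)"
        using r' c' mp Zc by (simp add: N_def restrict_sigma_def)
    qed (auto simp: N_def)
    finally show ?thesis .
  qed
  define P where "P = mat N N (\<lambda>(r,c). if r mod m = c mod m then \<omega>^((r div m)*(c div m)) else 0)"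
  define Q where "Q = mat N N (\<lambda>(r,c). if r mod m = c mod m then dinv * \<omega>^((d-1)*(r div m)*(c div m)) else 0)"
  have Pc: "P \<in> carrier_mat (d*m) (d*m)" and Qc: "Q \<in> carrier_mat (d*m) (d*m)"
    and Sc: "S \<in> carrier_mat (d*m) (d*m)" and Dc: "D \<in> carrier_mat (d*m) (d*m)"
    by (auto simp: P_def Q_def S_eq D_eq N_def)
  have Pe: "P $$ (j*m+e, c) = (if e = c mod m then \<omega>^(j*(c div m)) else 0)"
    if "j < d" "e < m" "c < N" for j e c using that blk_lt[OF that(1,2)] by (simp add: P_def N_def)
  have Pe2: "P $$ (r, j*m+e) = (if r mod m = e then \<omega>^((r div m)*j) else 0)"
    if "j < d" "e < m" "r < N" for j e r using that blk_lt[OF that(1,2)] by (simp add: P_def N_def)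
  have Qe: "Q $$ (j*m+e, c) = (if e = c mod m then dinv * \<omega>^((d-1)*j*(c div m)) else 0)"
    if "j < d" "e < m" "c < N" for j e c using that blk_lt[OF that(1,2)] by (simp add: Q_def N_def)
  have Qe2: "Q $$ (r, j*m+e) = (if r mod m = e then dinv * \<omega>^((d-1)*(r div m)*j) else 0)"
    if "j < d" "e < m" "r < N" for j e r using that blk_lt[OF that(1,2)] by (simp add: Q_def N_def)
  have Se: "S $$ (j*m+e, c) = (if c div m = (j + d - 1) mod d then Z $$ (e, c mod m) else 0)"
    if "j < d" "e < m" "c < N" for j e c using that blk_lt[OF that(1,2)] by (simp add: S_eq N_def)
  have De: "D $$ (r, j*m+e) = (if r div m = j then \<omega>^(r div m) * Z $$ (r mod m, e) else 0)"
    if "j < d" "e < m" "r < N" for j e r using that blk_lt[OF that(1,2)] by (simp add: D_eq N_def)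
  have ent: "r mod m < m \<and> r div m < d" if "r < N" for r
  proof -
    have "m > 0" using that by (cases m) (auto simp: N_def)
    then show ?thesis using that by (simp add: N_def less_mult_imp_div_less)
  qed
  have QP: "Q * P = 1\<^sub>m N"
  proof (rule eq_matI)
    fix r c assume "r < dim_row (1\<^sub>m N)" "c < dim_col (1\<^sub>m N)"
    then have r: "r < N" and c: "c < N" by auto
    have "(Q * P) $$ (r,c) = (\<Sum>j<d. \<Sum>e<m. (if r mod m = e then dinv * \<omega>^((d-1)*(r div m)*j) else 0)
         * (if e = c mod m then \<omega>^(j*(c div m)) else 0))"
      using mult_entry_blocks[OF Qc Pc] r c Qe2 Pe by (simp add: N_def)
    also have "\<dots> = (\<Sum>j<d. if r mod m = c mod m then dinv * (\<omega>^(j*((d-1)*(r div m)+(c div m)))) else 0)"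
    proof (rule sum.cong[OF refl])
      fix j assume "j \<in> {..<d}"
      have ex: "(d-1)*(r div m)*j + j*(c div m) = j*((d-1)*(r div m)+(c div m))"
        by (simp add: distrib_left mult_ac)
      show "(\<Sum>e<m. (if r mod m = e then dinv * \<omega>^((d-1)*(r div m)*j) else 0)
         * (if e = c mod m then \<omega>^(j*(c div m)) else 0)) = (if r mod m = c mod m then dinv * (\<omega>^(j*((d-1)*(r div m)+(c div m)))) else 0)"
      proof -
        have eq: "(dinv * \<omega>^((d-1)*(r div m)*j)) * \<omega>^(j*(c div m)) = dinv * (\<omega>^(j*((d-1)*(r div m)+(c div m))))"
          by (simp only: mult.assoc[of dinv] power_add[symmetric] ex)
        have "(\<Sum>e<m. (if r mod m = e then dinv * \<omega>^((d-1)*(r div m)*j) else 0)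
         * (if e = c mod m then \<omega>^(j*(c div m)) else 0)) = (if r mod m = c mod m then (dinv * \<omega>^((d-1)*(r div m)*j)) * \<omega>^(j*(c div m)) else 0)"
          by (rule collapse2) (use ent[OF r] in simp)
        then show ?thesis by (simp only: eq)
      qed
    qed
    also have "\<dots> = (if r = c then 1 else 0)"
    proof (cases "r mod m = c mod m")
      case True
      have "(\<Sum>j<d. dinv * (\<omega>^(j*((d-1)*(r div m)+(c div m))))) = dinv * (if r div m = c div m then of_nat d else 0)"
        using orth[OF loc dunit prim, of "r div m" "c div m"] ent[OF r] ent[OF c]
        by (simp add: sum_distrib_left[symmetric])
      moreover have "(r = c) = (r div m = c div m)" using True
        by (metis div_mult_mod_eq)
      ultimately show ?thesis using True dinv by (simp add: mult.commute)
    next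
      case False
      then show ?thesis by auto
    qed
    finally show "(Q * P) $$ (r,c) = 1\<^sub>m N $$ (r,c)" using r c by simp
  qed (use Qc Pc in \<open>auto simp: N_def\<close>)
  have PQ: "P * Q = 1\<^sub>m N"
  proof (rule eq_matI)
    fix r c assume "r < dim_row (1\<^sub>m N)" "c < dim_col (1\<^sub>m N)"
    then have r: "r < N" and c: "c < N" by auto
    have "(P * Q) $$ (r,c) = (\<Sum>j<d. \<Sum>e<m. (if r mod m = e then \<omega>^((r div m)*j) else 0)
         * (if e = c mod m then dinv * \<omega>^((d-1)*j*(c div m)) else 0))"
      using mult_entry_blocks[OF Pc Qc] r c Pe2 Qe by (simp add: N_def)
    also have "\<dots> = (\<Sum>j<d. if r mod m = c mod m then dinv * (\<omega>^(j*((d-1)*(c div m)+(r div m)))) else 0)"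
    proof (rule sum.cong[OF refl])
      fix j assume "j \<in> {..<d}"
      have ex: "(r div m)*j + (d-1)*j*(c div m) = j*((d-1)*(c div m)+(r div m))"
        by (simp add: distrib_left mult_ac)
      show "(\<Sum>e<m. (if r mod m = e then \<omega>^((r div m)*j) else 0)
         * (if e = c mod m then dinv * \<omega>^((d-1)*j*(c div m)) else 0)) = (if r mod m = c mod m then dinv * (\<omega>^(j*((d-1)*(c div m)+(r div m)))) else 0)"
      proof -
        have eq: "\<omega>^((r div m)*j) * (dinv * \<omega>^((d-1)*j*(c div m))) = dinv * (\<omega>^(j*((d-1)*(c div m)+(r div m))))"
          by (simp only: mult.left_commute[of _ dinv] power_add[symmetric] ex[symmetric])
        have "(\<Sum>e<m. (if r mod m = e then \<omega>^((r div m)*j) else 0)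
         * (if e = c mod m then dinv * \<omega>^((d-1)*j*(c div m)) else 0)) = (if r mod m = c mod m then \<omega>^((r div m)*j) * (dinv * \<omega>^((d-1)*j*(c div m))) else 0)"
          by (rule collapse2) (use ent[OF r] in simp)
        then show ?thesis by (simp only: eq)
      qed
    qed
    also have "\<dots> = (if r = c then 1 else 0)"
    proof (cases "r mod m = c mod m")
      case True
      have "(\<Sum>j<d. dinv * (\<omega>^(j*((d-1)*(c div m)+(r div m))))) = dinv * (if c div m = r div m then of_nat d else 0)"
        using orth[OF loc dunit prim, of "c div m" "r div m"] ent[OF r] ent[OF c]
        by (simp add: sum_distrib_left[symmetric])
      moreover have "(r = c) = (r div m = c div m)" using True
        by (metis div_mult_mod_eq)
      ultimately show ?thesis using True dinv by (auto simp: mult.commute)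
    next
      case False
      then show ?thesis by auto
    qed
    finally show "(P * Q) $$ (r,c) = 1\<^sub>m N $$ (r,c)" using r c by simp
  qed (use Qc Pc in \<open>auto simp: N_def\<close>)
  have PS: "P * S = D * P"
  proof (rule eq_matI)
    fix r c assume "r < dim_row (D * P)" "c < dim_col (D * P)"
    then have r: "r < N" and c: "c < N" using Dc Pc by (auto simp: N_def)
    have "(P * S) $$ (r,c) = (\<Sum>j<d. \<Sum>e<m. (if r mod m = e then \<omega>^((r div m)*j) else 0)
         * (if c div m = (j + d - 1) mod d then Z $$ (e, c mod m) else 0))"
      using mult_entry_blocks[OF Pc Sc] r c Pe2 Se by (simp add: N_def)
    also have "\<dots> = (\<Sum>j<d. \<omega>^((r div m)*j) * (if j = (c div m + 1) mod d then Z $$ (r mod m, c mod m) else 0))"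
    proof (rule sum.cong[OF refl])
      fix j assume j: "j \<in> {..<d}"
      have iff: "(c div m = (j + d - 1) mod d) = (j = (c div m + 1) mod d)"
        using idx_shift[of j d "c div m"] j ent[OF c] by simp
      have "(\<Sum>e<m. (if r mod m = e then \<omega>^((r div m)*j) else 0)
         * (if c div m = (j + d - 1) mod d then Z $$ (e, c mod m) else 0)) =
          \<omega>^((r div m)*j) * (if c div m = (j + d - 1) mod d then Z $$ (r mod m, c mod m) else 0)"
        by (rule collapse_l) (use ent[OF r] in simp)
      then show "(\<Sum>e<m. (if r mod m = e then \<omega>^((r div m)*j) else 0)
         * (if c div m = (j + d - 1) mod d then Z $$ (e, c mod m) else 0)) =
          \<omega>^((r div m)*j) * (if j = (c div m + 1) mod d then Z $$ (r mod m, c mod m) else 0)"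
        by (simp only: iff)
    qed
    also have "\<dots> = \<omega>^((r div m)*((c div m + 1) mod d)) * Z $$ (r mod m, c mod m)"
      using d2 by (simp add: mult_if0)
    also have "\<dots> = \<omega>^(r div m) * Z $$ (r mod m, c mod m) * \<omega>^((r div m)*(c div m))"
    proof -
      have "\<omega>^((r div m)*((c div m + 1) mod d)) = \<omega>^((r div m)*((c div m + 1) mod d) mod d)"
        by (rule pow_mod[OF wd])
      also have "\<dots> = \<omega>^((r div m)*(c div m + 1) mod d)" by (simp add: mod_mult_right_eq)
      also have "\<dots> = \<omega>^((r div m)*(c div m + 1))" by (rule pow_mod[OF wd, symmetric])
      also have "\<dots> = \<omega>^(r div m) * \<omega>^((r div m)*(c div m))" by (simp add: power_add distrib_left mult.commute)
      finally show ?thesis by (simp add: mult_ac)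
    qed
    also have "\<dots> = (\<Sum>j<d. \<Sum>e<m. (if r div m = j then \<omega>^(r div m) * Z $$ (r mod m, e) else 0)
         * (if e = c mod m then \<omega>^(j*(c div m)) else 0))"
    proof -
      have "(\<Sum>j<d. \<Sum>e<m. (if r div m = j then \<omega>^(r div m) * Z $$ (r mod m, e) else 0)
         * (if e = c mod m then \<omega>^(j*(c div m)) else 0)) =
         (\<Sum>j<d. (if r div m = j then \<omega>^(r div m) * Z $$ (r mod m, c mod m) else 0) * \<omega>^(j*(c div m)))"
        by (rule sum.cong[OF refl], rule collapse_r) (use ent[OF c] in simp)
      also have "\<dots> = \<omega>^(r div m) * Z $$ (r mod m, c mod m) * \<omega>^((r div m)*(c div m))"
        using ent[OF r] by (simp add: if0_mult)
      finally show ?thesis by simp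
    qed
    also have "\<dots> = (D * P) $$ (r,c)"
      using mult_entry_blocks[OF Dc Pc] r c De Pe by (simp add: N_def)
    finally show "(P * S) $$ (r,c) = (D * P) $$ (r,c)" .
  qed (use Dc Pc Sc in auto)
  have dSr: "dim_row S = N" by (simp add: S_eq)
  have dDr: "dim_row D = N" by (simp add: D_eq)
  have PcN: "P \<in> carrier_mat N N" and QcN: "Q \<in> carrier_mat N N" using Pc Qc by (simp_all add: N_def)
  show ?thesis
    unfolding MCM_iso_def S_def[symmetric] D_def[symmetric] dSr dDr
    using PcN QcN QP PQ PS by blast
qed

definition tau :: "nat \<Rightarrow> nat \<Rightarrow> nat \<Rightarrow> nat" where
  "tau d i k = (if k + i + 1 \<le> d then d - (k+i+1) else 2*d - (k+i+1))"

lemma tau_lt: "k < d \<Longrightarrow> i < d \<Longrightarrow> tau d i k < d"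
  unfolding tau_def by (cases "k + i + 1 \<le> d") arith+

lemma tau_sum: "k < d \<Longrightarrow> i < d \<Longrightarrow> tau d i k + k + i + 1 = d \<or> tau d i k + k + i + 1 = 2*d"
  unfolding tau_def by (cases "k + i + 1 \<le> d") arith+

lemma tau_char: assumes "k < d" "i < d" "t < d"
  shows "(t = tau d i k) = (t + k + i + 1 = d \<or> t + k + i + 1 = 2*d)"
proof
  assume "t = tau d i k" then show "t + k + i + 1 = d \<or> t + k + i + 1 = 2*d" using tau_sum[OF assms(1,2)] by simp
next
  assume h: "t + k + i + 1 = d \<or> t + k + i + 1 = 2*d"
  have "tau d i k + k + i + 1 = d \<or> tau d i k + k + i + 1 = 2*d" by (rule tau_sum[OF assms(1,2)])
  moreover have "tau d i k < d" by (rule tau_lt[OF assms(1,2)])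
  ultimately show "t = tau d i k" using h assms(3) by arith
qed

lemma tau_inv: assumes "k < d" "i < d" shows "tau d i (tau d i k) = k"
proof -
  have t: "tau d i k < d" by (rule tau_lt[OF assms])
  have "(k = tau d i (tau d i k)) = (k + tau d i k + i + 1 = d \<or> k + tau d i k + i + 1 = 2*d)"
    by (rule tau_char[OF t assms(2) assms(1)])
  moreover have "tau d i k + k + i + 1 = d \<or> tau d i k + k + i + 1 = 2*d" by (rule tau_sum[OF assms])
  ultimately show ?thesis by (simp add: add.commute add.left_commute)
qed

lemma mod_char: assumes "(x::nat) < 2*d" "y < d" shows "(x mod d = y) = (x = y \<or> x = y + d)"
proof (cases "x < d")
  case True then show ?thesis using assms by simp
next
  case False
  then have "x mod d = x - d" using assms(1) by (simp add: mod2)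
  then show ?thesis using False assms by arith
qed

lemma succ_mod: assumes "(i::nat) < d" shows "(i + 1) mod d = (if i + 1 < d then i + 1 else 0)"
proof (cases "i + 1 < d")
  case True
  then show ?thesis using mod_less[OF True] by simp
next
  case False
  then have "i + 1 = d" using assms by simp
  then show ?thesis by simp
qed

lemma A1: assumes k: "k < d" and l: "l < d" and i: "i < d"
  shows "(l = (tau d i k + d - 1) mod d) = (k = tau d ((i+1) mod d) l)"
proof -
  have t: "tau d i k < d" using tau_lt[OF k i] .
  have ts: "tau d i k + k + i + 1 = d \<or> tau d i k + k + i + 1 = 2*d" using tau_sum[OF k i] .
  have i': "(i+1) mod d < d" using i by simp
  have L: "(l = (tau d i k + d - 1) mod d) = (tau d i k + d - 1 = l \<or> tau d i k + d - 1 = l + d)"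
    using mod_char[of "tau d i k + d - 1" d l] t l by auto
  have R: "(k = tau d ((i+1) mod d) l) = (k + l + (i+1) mod d + 1 = d \<or> k + l + (i+1) mod d + 1 = 2*d)"
    by (rule tau_char[OF l i' k])
  show ?thesis
  proof (cases "i + 1 < d")
    case True
    then have "(i+1) mod d = i + 1" by simp
    then show ?thesis unfolding L R using ts t k l i by arith
  next
    case False
    then have id: "i + 1 = d" using i by simp
    then have "(i+1) mod d = 0" by simp
    then show ?thesis unfolding L R using ts t k l i id by arith
  qed
qed

lemma A2: assumes k: "k < d" and i: "i < d"
  shows "(2*d - tau d i k - 1) mod d = (k + i) mod d"
proof -
  have t: "tau d i k < d" using tau_lt[OF k i] .
  have ts: "tau d i k + k + i + 1 = d \<or> tau d i k + k + i + 1 = 2*d" using tau_sum[OF k i] .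
  define y where "y = (k + i) mod d"
  have y: "y < d" using k by (simp add: y_def)
  have yc: "k + i = y \<or> k + i = y + d" using mod_char[of "k+i" d y] k i y by (simp add: y_def)
  have "2*d - tau d i k - 1 = y \<or> 2*d - tau d i k - 1 = y + d" using ts yc t k i y by arith
  then have "(2*d - tau d i k - 1) mod d = y" using mod_char[of "2*d - tau d i k - 1" d y] t y by auto
  then show ?thesis by (simp add: y_def)
qed

lemma part1:
  fixes f \<mu> :: "'a::comm_ring_1" and d n :: nat and X :: "'a mat list"
  assumes d2: "d \<ge> 2" and mu: "\<mu>^d = -1" and X: "is_MF d f n X"
  shows "MF_iso d (flat d \<mu> (sharp d \<mu> X)) (MF_sum d (map (\<lambda>k. MF_shift k X) [0..<d]))"
proof -
  have lenX: "length X = d" and Xc: "\<And>i. i < d \<Longrightarrow> X ! i \<in> carrier_mat n n"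
    using X by (auto simp: is_MF_def)
  have dp: "d > 0" using d2 by simp
  have X0: "dim_row (X ! 0) = n" using Xc[OF dp] by simp
  have mi2: "\<mu> * unit_inv \<mu> = 1" using mu_inv[OF mu] d2 by (simp add: mult.commute)
  define N where "N = d * n"
  define W where "W = mat N N (\<lambda>(r,c). if c div n = (r div n + d - 1) mod d
      then X ! ((2*d - r div n - 1) mod d) $$ (r mod n, c mod n) else 0)"
  define Dm where "Dm i = mat N N (\<lambda>(r,c). if r div n = c div n
      then X ! ((r div n + i) mod d) $$ (r mod n, c mod n) else 0)" for i
  define hp where "hp i r = tau d i (r div n) * n + r mod n" for i r
  define Am where "Am i = mat N N (\<lambda>(r,c). if c = hp i r then 1 else (0::'a))" for i
  have ent: "r mod n < n \<and> r div n < d" if "r < N" for r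
  proof -
    have "n > 0" using that by (cases n) (auto simp: N_def)
    then show ?thesis using that by (simp add: N_def less_mult_imp_div_less)
  qed
  have hp_lt: "hp i r < N" if "r < N" "i < d" for i r
    using blk_lt[OF tau_lt[OF conjunct2[OF ent[OF that(1)]] that(2)] conjunct1[OF ent[OF that(1)]]]
    by (simp add: hp_def N_def)
  have hp_div: "hp i r div n = tau d i (r div n)" and hp_mod: "hp i r mod n = r mod n" if "r < N" for i r
    using ent[OF that] by (simp_all add: hp_def)
  have hp_inv: "hp i (hp i r) = r" if "r < N" "i < d" for i r
  proof -
    have "hp i (hp i r) = tau d i (tau d i (r div n)) * n + r mod n"
      unfolding hp_def[of i "hp i r"] hp_div[OF that(1)] hp_mod[OF that(1)] ..
    also have "\<dots> = r div n * n + r mod n" using tau_inv ent[OF that(1)] that(2) by simp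
    finally show ?thesis by simp
  qed
  have Amc: "Am i \<in> carrier_mat N N" for i by (simp add: Am_def)
  have Am_left: "(Am i * M) $$ (r,c) = M $$ (hp i r, c)"
    if "M \<in> carrier_mat N K" "r < N" "c < K" "i < d" for M K r c i
  proof -
    have "(Am i * M) $$ (r,c) = (\<Sum>t\<in>{0..<N}. Am i $$ (r,t) * M $$ (t,c))"
      using that by (auto simp: scalar_prod_def Am_def intro!: sum.cong)
    also have "\<dots> = (\<Sum>t\<in>{0..<N}. if t = hp i r then M $$ (t,c) else 0)"
      using that by (intro sum.cong refl) (auto simp: Am_def)
    also have "\<dots> = M $$ (hp i r, c)" using hp_lt[OF that(2,4)] by simp
    finally show ?thesis .
  qed
  have Am_right: "(M * Am i) $$ (r,c) = M $$ (r, hp i c)"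
    if "M \<in> carrier_mat K N" "r < K" "c < N" "i < d" for M K r c i
  proof -
    have "(M * Am i) $$ (r,c) = (\<Sum>t\<in>{0..<N}. M $$ (r,t) * Am i $$ (t,c))"
      using that by (auto simp: scalar_prod_def Am_def intro!: sum.cong)
    also have "\<dots> = (\<Sum>t\<in>{0..<N}. if t = hp i c then M $$ (r,t) else 0)"
    proof (intro sum.cong refl)
      fix t assume t: "t \<in> {0..<N}"
      have "(c = hp i t) = (t = hp i c)" using hp_inv[of t i] hp_inv[of c i] t that(3,4) by auto
      then show "M $$ (r,t) * Am i $$ (t,c) = (if t = hp i c then M $$ (r,t) else 0)"
        using t that by (simp add: Am_def)
    qed
    also have "\<dots> = M $$ (r, hp i c)" using hp_lt[OF that(3,4)] by simp
    finally show ?thesis .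
  qed
  have AA: "Am i * Am i = 1\<^sub>m N" if "i < d" for i
  proof (rule eq_matI)
    fix r c assume "r < dim_row (1\<^sub>m N)" "c < dim_col (1\<^sub>m N)"
    then have r: "r < N" and c: "c < N" by auto
    have "(Am i * Am i) $$ (r,c) = Am i $$ (hp i r, c)" by (rule Am_left[OF Amc r c that])
    also have "\<dots> = (if c = hp i (hp i r) then 1 else 0)" using hp_lt[OF r that] c by (simp add: Am_def)
    also have "\<dots> = 1\<^sub>m N $$ (r,c)" using hp_inv[OF r that] r c by auto
    finally show "(Am i * Am i) $$ (r,c) = 1\<^sub>m N $$ (r,c)" .
  qed (auto simp: Am_def)
  have Wc: "W \<in> carrier_mat N N" and Dmc: "Dm i \<in> carrier_mat N N" for i by (simp_all add: W_def Dm_def)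
  have hom1: "Am i * W = Dm i * Am ((i+1) mod d)" if i: "i < d" for i
  proof (rule eq_matI)
    have i': "(i+1) mod d < d" using dp by simp
    fix r c assume "r < dim_row (Dm i * Am ((i+1) mod d))" "c < dim_col (Dm i * Am ((i+1) mod d))"
    then have r: "r < N" and c: "c < N" by (auto simp: Dm_def Am_def)
    have k: "r div n < d" and l: "c div n < d" using ent[OF r] ent[OF c] by auto
    have "(Am i * W) $$ (r,c) = W $$ (hp i r, c)" by (rule Am_left[OF Wc r c i])
    also have "\<dots> = (if c div n = (tau d i (r div n) + d - 1) mod d
      then X ! ((2*d - tau d i (r div n) - 1) mod d) $$ (r mod n, c mod n) else 0)"
      using hp_lt[OF r i] c hp_div[OF r] hp_mod[OF r] by (simp add: W_def)
    also have "\<dots> = (if r div n = tau d ((i+1) mod d) (c div n)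
      then X ! ((r div n + i) mod d) $$ (r mod n, c mod n) else 0)"
      by (simp only: A1[OF k l i] A2[OF k i])
    also have "\<dots> = Dm i $$ (r, hp ((i+1) mod d) c)"
      using hp_lt[OF c i'] r hp_div[OF c] hp_mod[OF c] by (simp add: Dm_def)
    also have "\<dots> = (Dm i * Am ((i+1) mod d)) $$ (r,c)" by (rule Am_right[OF Dmc r c i', symmetric])
    finally show "(Am i * W) $$ (r,c) = (Dm i * Am ((i+1) mod d)) $$ (r,c)" .
  qed (auto simp: Dm_def Am_def W_def)
  have hom2: "Am i * Dm i = W * Am ((i+1) mod d)" if i: "i < d" for i
  proof -
    have i': "(i+1) mod d < d" using dp by simp
    have "Am i * Dm i = (Am i * Dm i) * (Am ((i+1) mod d) * Am ((i+1) mod d))"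
      using AA[OF i'] right_mult_one_mat[OF mult_carrier_mat[OF Amc Dmc]] by simp
    also have "\<dots> = ((Am i * Dm i) * Am ((i+1) mod d)) * Am ((i+1) mod d)"
      by (rule assoc_mult_mat[symmetric, OF mult_carrier_mat[OF Amc Dmc] Amc Amc])
    also have "\<dots> = Am i * (Dm i * Am ((i+1) mod d)) * Am ((i+1) mod d)"
      by (simp only: assoc_mult_mat[OF Amc Dmc Amc])
    also have "\<dots> = Am i * (Am i * W) * Am ((i+1) mod d)" using hom1[OF i] by simp
    also have "\<dots> = (Am i * Am i) * W * Am ((i+1) mod d)"
      by (simp only: assoc_mult_mat[OF Amc Amc Wc])
    also have "\<dots> = W * Am ((i+1) mod d)" using AA[OF i] Wc by simp
    finally show ?thesis .
  qed
  have Fl: "flat d \<mu> (sharp d \<mu> X) ! i = W" if i: "i < d" for i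
  proof -
    have "\<mu> \<cdot>\<^sub>m sharp d \<mu> X = W"
    proof (rule eq_matI)
      fix r c assume "r < dim_row W" "c < dim_col W"
      then have r: "r < N" and c: "c < N" by (auto simp: W_def)
      define C where "C = (c div n = (r div n + d - 1) mod d)"
      define x where "x = X ! ((2*d - r div n - 1) mod d) $$ (r mod n, c mod n)"
      have "sharp d \<mu> X $$ (r,c) = (if C then unit_inv \<mu> * x else 0)"
        unfolding sharp_def Let_def X0 C_def x_def using r c unfolding N_def
        by (simp only: index_mat(1) prod.case)
      moreover have "dim_row (sharp d \<mu> X) = N" "dim_col (sharp d \<mu> X) = N"
        by (simp_all add: sharp_def Let_def X0 N_def)
      ultimately have "(\<mu> \<cdot>\<^sub>m sharp d \<mu> X) $$ (r,c) = \<mu> * (if C then unit_inv \<mu> * x else 0)"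
        using r c by simp
      also have "\<dots> = (if C then x else 0)" by (cases C) (simp_all add: mult.assoc[symmetric] mi2)
      also have "\<dots> = W $$ (r,c)" using r c unfolding W_def C_def x_def by simp
      finally show "(\<mu> \<cdot>\<^sub>m sharp d \<mu> X) $$ (r,c) = W $$ (r,c)" .
    qed (auto simp: W_def sharp_def Let_def X0 N_def)
    then show ?thesis by (subst flat_nth[OF i])
  qed
  have Fs: "MF_sum d (map (\<lambda>k. MF_shift k X) [0..<d]) ! i = Dm i" if i: "i < d" for i
  proof -
    have rot: "rotate k X ! i = X ! ((k + i) mod d)" for k using nth_rotate[of i X k] i lenX by simp
    have "MF_sum d (map (\<lambda>k. MF_shift k X) [0..<d]) ! i = diag_block_mat (map (\<lambda>k. X ! ((k + i) mod d)) [0..<d])"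
      using i by (simp add: MF_sum_def MF_shift_def rot comp_def)
    also have "\<dots> = mat (length (map (\<lambda>k. X ! ((k + i) mod d)) [0..<d]) * n) (length (map (\<lambda>k. X ! ((k + i) mod d)) [0..<d]) * n)
      (\<lambda>(r,c). if r div n = c div n then (map (\<lambda>k. X ! ((k + i) mod d)) [0..<d]) ! (r div n) $$ (r mod n, c mod n) else 0)"
      by (rule diag_block_mat_eq) (use Xc dp in auto)
    also have "\<dots> = Dm i"
    proof (rule eq_matI)
      fix r c assume "r < dim_row (Dm i)" "c < dim_col (Dm i)"
      then have r: "r < N" and c: "c < N" by (auto simp: Dm_def)
      then show "mat (length (map (\<lambda>k. X ! ((k + i) mod d)) [0..<d]) * n) (length (map (\<lambda>k. X ! ((k + i) mod d)) [0..<d]) * n)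
      (\<lambda>(r,c). if r div n = c div n then (map (\<lambda>k. X ! ((k + i) mod d)) [0..<d]) ! (r div n) $$ (r mod n, c mod n) else 0) $$ (r,c) = Dm i $$ (r,c)"
        using ent[OF r] by (simp add: Dm_def N_def)
    qed (auto simp: Dm_def N_def)
    finally show ?thesis .
  qed
  have d1: "dim_row (flat d \<mu> (sharp d \<mu> X) ! 0) = N" using Fl[OF dp] by (simp add: W_def)
  have d2': "dim_row (MF_sum d (map (\<lambda>k. MF_shift k X) [0..<d]) ! 0) = N" using Fs[OF dp] by (simp add: Dm_def)
  define A where "A = map Am [0..<d]"
  have An: "A ! i = Am i" if "i < d" for i using that by (simp add: A_def)
  have Am1: "A ! ((i+1) mod d) = Am ((i+1) mod d)" for i using dp by (simp add: A_def)
  have h1: "is_MF_hom d N N (flat d \<mu> (sharp d \<mu> X)) (MF_sum d (map (\<lambda>k. MF_shift k X) [0..<d])) A"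
    unfolding is_MF_hom_def using An Am1 Fl Fs hom1 Amc by (simp add: A_def)
  have h2: "is_MF_hom d N N (MF_sum d (map (\<lambda>k. MF_shift k X) [0..<d])) (flat d \<mu> (sharp d \<mu> X)) A"
    unfolding is_MF_hom_def using An Am1 Fl Fs hom2 Amc by (simp add: A_def)
  show ?thesis unfolding MF_iso_def d1 d2' using h1 h2 AA An by metis
qed

theorem proposition2p4:
  fixes d :: nat and f \<mu> \<omega> :: "'a::comm_ring_1"
  assumes "d \<ge> 2"
    and "regular_local_ring TYPE('a)" and "complete_local_ring TYPE('a)"
    and "residue_field_alg_closed TYPE('a)"
    and "of_nat d \<notin> (max_ideal :: 'a set)"
    and "f \<noteq> 0" and "f \<in> ideal_pow max_ideal 2"
    and "\<mu> ^ d = -1" and "primitive_root d \<omega>"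
  shows "(\<forall>n X. is_MF d f n X \<longrightarrow>
            MF_iso d (flat d \<mu> (sharp d \<mu> X)) (MF_sum d (map (\<lambda>k. MF_shift k X) [0..<d])))
       \<and> (\<forall>Z. is_MCM d f Z \<longrightarrow>
            MCM_iso (sharp d \<mu> (flat d \<mu> Z)) (MCM_sum (map (\<lambda>k. restrict_sigma \<omega> k Z) [0..<d])))"
proof -
  have loc: "local_ring TYPE('a)" using assms(2) by (simp add: regular_local_ring_def)
  show ?thesis
  proof (intro conjI allI impI)
    fix n X assume "is_MF d f n X"
    then show "MF_iso d (flat d \<mu> (sharp d \<mu> X)) (MF_sum d (map (\<lambda>k. MF_shift k X) [0..<d]))"
      by (rule part1[OF assms(1) assms(8)])
  next
    fix Z assume "is_MCM d f Z"
    then show "MCM_iso (sharp d \<mu> (flat d \<mu> Z)) (MCM_sum (map (\<lambda>k. restrict_sigma \<omega> k Z) [0..<d]))"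
      by (rule part2[OF assms(1) assms(8) loc assms(5) assms(9)])
  qed
qed

end
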